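(* Let $X \ge 1$. Let $P \subseteq \{1,\dots,X\}$ be an arithmetic progression of length $\ge X^{3/4}$. Let $\mathcal{Q}$ be a set of pairwise coprime positive integers with $\prod_{q \in \mathcal{Q}} q \ge X^{5/4}$, and suppose the common difference of $P$ is coprime to every $q \in \mathcal{Q}$. Let $S \subseteq \mathcal{Q}$ satisfy $(\max_{q \in \mathcal{Q}} q)^{|S|} \le X^{1/4}$, and let $T \subseteq S$. Let $a \in G_S$. Put $\mathcal{Q}' := \mathcal{Q} \setminus S$ and $P' := \{ x \in P : x \equiv a \pmod{\prod_{q \in S \setminus T} q}\}$ (where $a$ is reduced to a residue class modulo $\prod_{q\in S\setminus T}q$ via the Chinese remainder theorem). Then the lift $\Psi_{P',\mathcal{Q}'}$ is well-defined, and there is a real number $\eta$ with $|\eta| \le X^{-1/2}$ such that for every $f \in B(P)$, \[ \sigma_{S\to a}\, E_T\, \Psi_{P,\mathcal{Q}} f = (1+\eta)\, \Psi_{P',\mathcal{Q}'}\big(f|_{P'}\big). \]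
   Context: For a finite set $\Sigma$, $B(\Sigma)$ denotes the space of functions $\Sigma\to\mathbb{C}$. For a set $\mathcal{R}$ of pairwise coprime positive integers, $G_{\mathcal{R}} := \prod_{q\in\mathcal{R}} \mathbb{Z}/q\mathbb{Z}\cong \mathbb{Z}/(\prod_{q\in\mathcal{R}}q)\mathbb{Z}$ (Chinese remainder theorem), and $\pi_{\mathcal{R}}:\mathbb{Z}\to G_{\mathcal{R}}$ is the natural projection. Characters of $G_{\mathcal{Q}}$ are identified with $\xi=\sum_{q\in\mathcal{Q}}\xi_q/q \in \bigoplus_{q\in\mathcal{Q}}(\frac1q\mathbb{Z}/\mathbb{Z})$, acting as $x\mapsto e(\xi x)$, $e(t)=e^{2\pi i t}$; Fourier coefficients are $\widehat{g}(\xi)=\mathbb{E}_{x\in G_{\mathcal{Q}}}g(x)\overline{e(\xi x)}$ so that $g=\sum_\xi \widehat g(\xi)e(\xi\cdot)$. For $T\subseteq\mathcal{Q}$, the averaging operator $E_T$ on $B(G_{\mathcal{Q}})$ is the Fourier multiplier $E_T e(\xi\cdot)=w(\xi)e(\xi\cdot)$ with $w(\xi)=1$ if $\xi_q=0$ for all $q\in T$ and $w(\xi)=0$ otherwise. For $S\subseteq\mathcal{Q}$ and $a\in G_S$, identify $G_{\mathcal{Q}}=G_S\times G_{\mathcal{Q}\setminus S}$ and define the specialisation $\sigma_{S\to a}:B(G_{\mathcal{Q}})\to B(G_{\mathcal{Q}\setminus S})$ by $(\sigma_{S\to a}g)(y)=g(a,y)$. Lifting: if $\mathcal{R}$ is a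 set of pairwise coprime positive integers with $\prod_{q\in\mathcal{R}}q\ge X$ and $P\subseteq\{1,\dots,X\}$ is an arithmetic progression whose common difference is coprime to all $q\in\mathcal{R}$, then $\Psi_{P,\mathcal{R}}:B(P)\to B(G_{\mathcal{R}})$ is defined by $(\Psi_{P,\mathcal{R}}f)(\pi_{\mathcal{R}}(x)) = |P|^{-1}|G_{\mathcal{R}}|f(x)$ for $x\in P$, and $\Psi_{P,\mathcal{R}}f=0$ off $\pi_{\mathcal{R}}(P)$ (this is well-defined since $\pi_{\mathcal{R}}$ is injective on $P$). *)

theory Defs
  imports "HOL-Analysis.Analysis" "HOL-Library.FuncSet"
begin

text \<open>Elements of G_R = prod_{q in R} Z/qZ are represented as extensional functions
  g with g q in {0..<q} for q in R (and g q = undefined outside R).\<close>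
definition Grp :: "nat set \<Rightarrow> (nat \<Rightarrow> nat) set" where
  "Grp R = (\<Pi>\<^sub>E q\<in>R. {..<q})"

definition proj :: "nat set \<Rightarrow> int \<Rightarrow> (nat \<Rightarrow> nat)" where
  "proj R x = restrict (\<lambda>q. nat (x mod int q)) R"

text \<open>e(xi x) for a character xi (also an element of G_Q) and x in G_Q.\<close>
definition echar :: "nat set \<Rightarrow> (nat \<Rightarrow> nat) \<Rightarrow> (nat \<Rightarrow> nat) \<Rightarrow> complex" where
  "echar Q \<xi> x = exp (2 * of_real pi * \<i> * of_real (\<Sum>q\<in>Q. real (\<xi> q * x q) / real q))"

definition fourier :: "nat set \<Rightarrow> ((nat \<Rightarrow> nat) \<Rightarrow> complex) \<Rightarrow> (nat \<Rightarrow> nat) \<Rightarrow> complex" where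
  "fourier Q g \<xi> = (\<Sum>x\<in>Grp Q. g x * cnj (echar Q \<xi> x)) / of_nat (card (Grp Q))"

text \<open>Averaging operator E_T as a Fourier multiplier.\<close>
definition avgE :: "nat set \<Rightarrow> nat set \<Rightarrow> ((nat \<Rightarrow> nat) \<Rightarrow> complex) \<Rightarrow> (nat \<Rightarrow> nat) \<Rightarrow> complex" where
  "avgE Q T g x = (\<Sum>\<xi>\<in>{\<xi>\<in>Grp Q. \<forall>q\<in>T. \<xi> q = 0}. fourier Q g \<xi> * echar Q \<xi> x)"

definition specialise :: "nat set \<Rightarrow> (nat \<Rightarrow> nat) \<Rightarrow> ((nat \<Rightarrow> nat) \<Rightarrow> complex) \<Rightarrow> (nat \<Rightarrow> nat) \<Rightarrow> complex" where
  "specialise S a g y = g (\<lambda>q. if q \<in> S then a q else y q)"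

definition lift :: "int set \<Rightarrow> nat set \<Rightarrow> (int \<Rightarrow> complex) \<Rightarrow> (nat \<Rightarrow> nat) \<Rightarrow> complex" where
  "lift P R f g = (if \<exists>x\<in>P. proj R x = g
     then of_real (real (card (Grp R)) / real (card P)) * f (THE x. x \<in> P \<and> proj R x = g)
     else 0)"

definition arith_prog :: "int set \<Rightarrow> int \<Rightarrow> bool" where
  "arith_prog P d \<longleftrightarrow> d > 0 \<and> (\<exists>b (n::nat). n \<ge> 1 \<and> P = {b + d * int k | k. k < n})"

end

theory Submission
  imports Defs "HOL-Number_Theory.Cong"
begin


lemma root_sum_zero:
  fixes q :: nat and r :: int
  assumes "q > 0" "\<not> int q dvd r"
  shows "(\<Sum>k<q. exp (2 * of_real pi * \<i> * of_real (real k * real_of_int r / real q))) = (0::complex)"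
proof -
  define w where "w = exp (2 * of_real pi * \<i> * of_real (real_of_int r / real q))"
  have eq: "exp (2 * of_real pi * \<i> * of_real (real k * real_of_int r / real q)) = w ^ k" for k
  proof -
    have "exp (2 * of_real pi * \<i> * of_real (real k * real_of_int r / real q)) =
          exp (of_nat k * (2 * of_real pi * \<i> * of_real (real_of_int r / real q)))"
      by (simp add: mult_ac)
    also have "\<dots> = w ^ k" unfolding w_def by (rule exp_of_nat_mult)
    finally show ?thesis .
  qed
  have w1: "w \<noteq> 1"
  proof
    assume "w = 1"
    then obtain j :: int where "real_of_int r / real q * pi * 2 = of_int (2 * j) * pi"
      unfolding w_def exp_eq_1 by (auto simp: mult_ac)
    hence "(real_of_int r / real q - of_int j) * (2*pi) = 0" by (simp add: algebra_simps)
    hence "real_of_int r / real q = of_int j" by simp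
    hence "real_of_int r = real_of_int (int q * j)" using assms(1) by (simp add: field_simps)
    hence "r = int q * j" by linarith
    thus False using assms(2) by simp
  qed
  have wq: "w ^ q = 1"
  proof -
    have "w ^ q = exp (of_nat q * (2 * of_real pi * \<i> * of_real (real_of_int r / real q)))"
      unfolding w_def by (rule exp_of_nat_mult[symmetric])
    also have "of_nat q * (2 * of_real pi * \<i> * of_real (real_of_int r / real q)) = 2 * of_real pi * \<i> * of_int r"
      using assms(1) by (simp add: field_simps)
    also have "exp \<dots> = 1" unfolding exp_eq_1 by (auto intro: exI[of _ r])
    finally show ?thesis .
  qed
  show ?thesis unfolding eq using w1 wq by (simp add: geometric_sum)
qed

lemma echar_prod:
  assumes "finite Q"
  shows "echar Q \<xi> x = (\<Prod>q\<in>Q. exp (2 * of_real pi * \<i> * of_real (real (\<xi> q * x q) / real q)))"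
  unfolding echar_def of_real_sum sum_distrib_left using assms by (simp add: exp_sum)

lemma char_factor:
  fixes q k :: nat and u v :: nat
  shows "cnj (exp (2 * of_real pi * \<i> * of_real (real (k * v) / real q))) *
         exp (2 * of_real pi * \<i> * of_real (real (k * u) / real q)) =
         exp (2 * of_real pi * \<i> * of_real (real k * real_of_int (int u - int v) / real q))"
proof -
  have "cnj (exp (2 * of_real pi * \<i> * of_real (real (k * v) / real q))) =
        exp (- (2 * of_real pi * \<i> * of_real (real (k * v) / real q)))"
    by (simp add: exp_cnj)
  thus ?thesis by (simp add: exp_add[symmetric] algebra_simps diff_divide_distrib)
qed

lemma Grp_T0:
  assumes "\<forall>q\<in>Q. q > 0" "T \<subseteq> Q"
  shows "{\<xi>\<in>Grp Q. \<forall>q\<in>T. \<xi> q = 0} = PiE Q (\<lambda>q. if q \<in> T then {0} else {..<q})"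
  using assms unfolding Grp_def by (auto simp: PiE_iff extensional_def split: if_splits)

lemma char_sum:
  assumes fin: "finite Q" and pos: "\<forall>q\<in>Q. q > 0" and TQ: "T \<subseteq> Q"
    and x: "x \<in> Grp Q" and z: "z \<in> Grp Q"
  shows "(\<Sum>\<xi>\<in>{\<xi>\<in>Grp Q. \<forall>q\<in>T. \<xi> q = 0}. cnj (echar Q \<xi> z) * echar Q \<xi> x)
       = (if \<forall>q\<in>Q-T. z q = x q then of_nat (\<Prod>(Q-T)) else 0)"
proof -
  define h where "h q k = exp (2 * of_real pi * \<i> * of_real (real k * real_of_int (int (x q) - int (z q)) / real q))" for q k :: nat
  have "(\<Sum>\<xi>\<in>{\<xi>\<in>Grp Q. \<forall>q\<in>T. \<xi> q = 0}. cnj (echar Q \<xi> z) * echar Q \<xi> x)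
      = (\<Sum>\<xi>\<in>PiE Q (\<lambda>q. if q \<in> T then {0} else {..<q}). \<Prod>q\<in>Q. h q (\<xi> q))"
    unfolding Grp_T0[OF pos TQ] echar_prod[OF fin] cnj_prod prod.distrib[symmetric] h_def char_factor ..
  also have "\<dots> = (\<Prod>q\<in>Q. \<Sum>k\<in>(if q \<in> T then {0} else {..<q}). h q k)"
    by (rule prod_sum_PiE[symmetric]) (use fin in auto)
  also have "\<dots> = (\<Prod>q\<in>Q. if q \<in> T then 1 else (if z q = x q then of_nat q else 0))"
  proof (rule prod.cong[OF refl])
    fix q assume qQ: "q \<in> Q"
    show "(\<Sum>k\<in>(if q \<in> T then {0} else {..<q}). h q k) = (if q \<in> T then 1 else (if z q = x q then of_nat q else 0))"
    proof (cases "q \<in> T")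
      case True thus ?thesis by (simp add: h_def)
    next
      case False
      show ?thesis
      proof (cases "z q = x q")
        case True thus ?thesis using False by (simp add: h_def)
      next
        case ne: False
        have "x q < q" "z q < q" using x z qQ unfolding Grp_def by (auto simp: PiE_iff)
        hence "\<not> int q dvd (int (x q) - int (z q))" using ne
        proof -
          assume a: "x q < q" "z q < q"
          have nz: "int (x q) - int (z q) \<noteq> 0" using ne by simp
          have "\<bar>int (x q) - int (z q)\<bar> < int q" using a by linarith
          thus ?thesis using dvd_imp_le_int[OF nz, of "int q"] by linarith
        qed
        hence "(\<Sum>k<q. h q k) = 0" unfolding h_def using pos qQ by (intro root_sum_zero) auto
        thus ?thesis using False ne by simp
      qed
    qed
  qed
  also have "\<dots> = (if \<forall>q\<in>Q-T. z q = x q then of_nat (\<Prod>(Q-T)) else 0)"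
  proof -
    have "(\<Prod>q\<in>Q. if q \<in> T then 1 else (if z q = x q then of_nat q else 0)) =
          (\<Prod>q\<in>Q-T. (if z q = x q then of_nat q else (0::complex)))"
      using fin TQ by (simp add: prod.If_cases Int_absorb2 Diff_eq)
    also have "\<dots> = (if \<forall>q\<in>Q-T. z q = x q then of_nat (\<Prod>(Q-T)) else 0)"
      using fin by (auto simp: prod_zero_iff)
    finally show ?thesis .
  qed
  finally show ?thesis .
qed

lemma card_Grp: "finite R \<Longrightarrow> card (Grp R) = \<Prod>R"
  unfolding Grp_def by (simp add: card_PiE)

lemma finite_Grp: "finite R \<Longrightarrow> finite (Grp R)"
  unfolding Grp_def by (simp add: finite_PiE)

lemma avgE_eq:
  assumes fin: "finite Q" and pos: "\<forall>q\<in>Q. q > 0" and TQ: "T \<subseteq> Q" and x: "x \<in> Grp Q"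
  shows "avgE Q T g x = (\<Sum>z\<in>{z\<in>Grp Q. \<forall>q\<in>Q-T. z q = x q}. g z) / of_nat (\<Prod>T)"
proof -
  let ?X = "{\<xi>\<in>Grp Q. \<forall>q\<in>T. \<xi> q = 0}"
  let ?N = "of_nat (card (Grp Q)) :: complex"
  have finX: "finite ?X" using finite_Grp[OF fin] by simp
  have "avgE Q T g x = (\<Sum>\<xi>\<in>?X. \<Sum>z\<in>Grp Q. g z * (cnj (echar Q \<xi> z) * echar Q \<xi> x) / ?N)"
    unfolding avgE_def fourier_def sum_divide_distrib sum_distrib_right
    by (simp add: mult_ac)
  also have "\<dots> = (\<Sum>z\<in>Grp Q. g z * (\<Sum>\<xi>\<in>?X. cnj (echar Q \<xi> z) * echar Q \<xi> x) / ?N)"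
    by (subst sum.swap) (simp add: sum_divide_distrib sum_distrib_left)
  also have "\<dots> = (\<Sum>z\<in>Grp Q. (if \<forall>q\<in>Q-T. z q = x q then g z * of_nat (\<Prod>(Q-T)) / ?N else 0))"
    by (rule sum.cong[OF refl]) (simp add: char_sum[OF fin pos TQ x])
  also have "\<dots> = (\<Sum>z\<in>{z\<in>Grp Q. \<forall>q\<in>Q-T. z q = x q}. g z * of_nat (\<Prod>(Q-T)) / ?N)"
    by (simp add: sum.inter_filter[OF finite_Grp[OF fin], symmetric])
  also have "\<dots> = (\<Sum>z\<in>{z\<in>Grp Q. \<forall>q\<in>Q-T. z q = x q}. g z) * (of_nat (\<Prod>(Q-T)) / ?N)"
    by (simp add: sum_distrib_right sum_divide_distrib)
  also have "of_nat (\<Prod>(Q-T)) / ?N = 1 / of_nat (\<Prod>T)"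
  proof -
    have "\<Prod>Q = \<Prod>(Q-T) * \<Prod>T" using prod.subset_diff[OF TQ fin, of id] by simp
    moreover have "\<Prod>(Q-T) \<noteq> 0" "\<Prod>T \<noteq> 0" using pos TQ fin
      by (auto simp: prod_zero_iff finite_subset)
    ultimately show ?thesis unfolding card_Grp[OF fin] by (simp add: field_simps del: of_nat_prod)
  qed
  finally show ?thesis by simp
qed



lemma dvd_prod_int:
  assumes "finite R" "\<forall>q\<in>R. \<forall>r\<in>R. q \<noteq> r \<longrightarrow> coprime q r" "\<forall>q\<in>R. int q dvd z"
  shows "int (\<Prod>R) dvd z"
  using assms
proof (induction R rule: finite_induct)
  case empty thus ?case by simp
next
  case (insert q R)
  have "coprime q (\<Prod>R)" using insert by (intro prod_coprime_right) auto
  hence "coprime (int q) (int (\<Prod>R))" by (simp only: coprime_int_iff)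
  moreover have "int (\<Prod>R) dvd z" using insert by auto
  moreover have "int q dvd z" using insert by auto
  ultimately have "int q * int (\<Prod>R) dvd z" by (intro divides_mult)
  thus ?case using insert by simp
qed

lemma proj_eq_Grp:
  assumes "y \<in> Grp R"
  shows "proj R x = y \<longleftrightarrow> (\<forall>q\<in>R. nat (x mod int q) = y q)"
  using assms unfolding proj_def Grp_def
  by (auto simp: PiE_iff extensional_def fun_eq_iff)

lemma proj_Grp:
  assumes "\<forall>q\<in>R. q > 0"
  shows "proj R x \<in> Grp R"
  using assms unfolding proj_def Grp_def
  by (auto simp: PiE_iff nat_less_iff)

lemma proj_eq_iff:
  assumes "\<forall>q\<in>R. q > 0"
  shows "proj R x = proj R y \<longleftrightarrow> (\<forall>q\<in>R. x mod int q = y mod int q)"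
proof -
  have "proj R x = proj R y \<longleftrightarrow> (\<forall>q\<in>R. nat (x mod int q) = nat (y mod int q))"
    using proj_eq_Grp[OF proj_Grp[OF assms], of x y] by (simp add: proj_def)
  also have "\<dots> \<longleftrightarrow> (\<forall>q\<in>R. x mod int q = y mod int q)"
    using assms by (auto simp: nat_eq_iff2)
  finally show ?thesis .
qed

lemma inj_proj:
  assumes fin: "finite R" and pos: "\<forall>q\<in>R. q > 0" and cop: "\<forall>q\<in>R. \<forall>r\<in>R. q \<noteq> r \<longrightarrow> coprime q r"
    and A: "A \<subseteq> {x. 1 \<le> x \<and> real_of_int x \<le> X}" and XR: "X \<le> real (\<Prod>R)"
  shows "inj_on (proj R) A"
proof (rule inj_onI)
  fix x y assume xA: "x \<in> A" and yA: "y \<in> A" and eq: "proj R x = proj R y"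
  have "\<forall>q\<in>R. int q dvd x - y" using eq proj_eq_iff[OF pos] by (simp add: mod_eq_dvd_iff)
  hence dv: "int (\<Prod>R) dvd x - y" using dvd_prod_int[OF fin cop] by blast
  show "x = y"
  proof (rule ccontr)
    assume "x \<noteq> y"
    hence "\<bar>int (\<Prod>R)\<bar> \<le> \<bar>x - y\<bar>" using dvd_imp_le_int dv by simp
    moreover have "real_of_int \<bar>x - y\<bar> < X"
    proof -
      have "1 \<le> real_of_int x" "real_of_int x \<le> X" "1 \<le> real_of_int y" "real_of_int y \<le> X"
        using xA yA A by force+
      thus ?thesis by (simp add: abs_less_iff)
    qed
    ultimately show False using XR by linarith
  qed
qed

lemma lift_at:
  assumes "inj_on (proj R) P" "x \<in> P"
  shows "lift P R f (proj R x) = of_real (real (card (Grp R)) / real (card P)) * f x"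
proof -
  have "(THE x'. x' \<in> P \<and> proj R x' = proj R x) = x"
    using assms by (auto intro!: the_equality dest: inj_onD)
  thus ?thesis using assms unfolding lift_def by auto
qed

lemma lift_zero:
  assumes "\<not> (\<exists>x\<in>P. proj R x = z)"
  shows "lift P R f z = 0"
  using assms unfolding lift_def by auto



theorem lemma3p2:
  fixes X :: real and P :: "int set" and d :: int and Q S T :: "nat set" and a :: "nat \<Rightarrow> nat"
  assumes X: "X \<ge> 1"
    and P_sub: "P \<subseteq> {x. 1 \<le> x \<and> real_of_int x \<le> X}"
    and P_ap: "arith_prog P d"
    and P_len: "real (card P) \<ge> X powr (3/4)"
    and Q_fin: "finite Q"
    and Q_pos: "\<forall>q\<in>Q. q > 0"
    and Q_cop: "\<forall>q\<in>Q. \<forall>r\<in>Q. q \<noteq> r \<longrightarrow> coprime q r"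
    and Q_prod: "real (\<Prod>Q) \<ge> X powr (5/4)"
    and d_cop: "\<forall>q\<in>Q. coprime d (int q)"
    and S_sub: "S \<subseteq> Q"
    and S_size: "real (Max Q) ^ card S \<le> X powr (1/4)"
    and T_sub: "T \<subseteq> S"
    and a_in: "a \<in> Grp S"
  shows "(P' = {x\<in>P. proj (S - T) x = restrict a (S - T)} \<and> Q' = Q - S) \<longrightarrow>
      (P' \<subseteq> {x. 1 \<le> x \<and> real_of_int x \<le> X}
       \<and> (\<exists>d'. arith_prog P' d' \<and> (\<forall>q\<in>Q'. coprime d' (int q)))
       \<and> real (\<Prod>Q') \<ge> X
       \<and> inj_on (proj Q') P')
    \<and> (\<exists>\<eta>::real. \<bar>\<eta>\<bar> \<le> X powr (-1/2) \<and>
         (\<forall>f::int \<Rightarrow> complex. \<forall>y\<in>Grp Q'.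
            specialise S a (avgE Q T (lift P Q f)) y = (1 + of_real \<eta>) * lift P' Q' f y))"
proof (intro impI)
  assume H: "P' = {x\<in>P. proj (S - T) x = restrict a (S - T)} \<and> Q' = Q - S"
  hence P'def: "P' = {x\<in>P. proj (S - T) x = restrict a (S - T)}" and Q'def: "Q' = Q - S" by auto
  from P_ap obtain b n where d0: "d > 0" and n1: "n \<ge> 1" and Pdef: "P = {b + d * int k | k. k < n}"
    unfolding arith_prog_def by blast
  have finS: "finite S" using S_sub Q_fin finite_subset by blast
  have finT: "finite T" using T_sub finS finite_subset by blast
  have finST: "finite (S - T)" using finS by simp
  have finQ': "finite Q'" using Q'def Q_fin by simp
  have posS: "\<forall>q\<in>S. q > 0" using S_sub Q_pos by auto
  have posST: "\<forall>q\<in>S-T. q > 0" using posS by auto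
  have posQ': "\<forall>q\<in>Q'. q > 0" using Q_pos Q'def by auto
  have copQ': "\<forall>q\<in>Q'. \<forall>r\<in>Q'. q \<noteq> r \<longrightarrow> coprime q r" using Q_cop Q'def by auto
  have copST: "\<forall>q\<in>S-T. \<forall>r\<in>S-T. q \<noteq> r \<longrightarrow> coprime q r" using Q_cop S_sub by auto
  define m where "m = \<Prod>(S - T)"
  have m0: "m > 0" unfolding m_def using posST finST by (simp add: prod_pos)
  have Pimg: "P = (\<lambda>k. b + d * int k) ` {..<n}" unfolding Pdef by auto
  have cardP: "card P = n"
  proof -
    have "inj_on (\<lambda>k. b + d * int k) {..<n}" using d0 by (auto intro: inj_onI)
    thus ?thesis unfolding Pimg by (simp add: card_image)
  qed
  have X14: "X powr (1/4) \<ge> 1" using X by (intro ge_one_powr_ge_zero) auto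
  have X1434: "X powr (1/4) \<le> X powr (3/4)" using X by (intro powr_mono) auto
  have prodU: "real (\<Prod>U) \<le> X powr (1/4)" if US: "U \<subseteq> S" for U
  proof (cases "S = {}")
    case True thus ?thesis using US X14 by simp
  next
    case False
    hence QnE: "Q \<noteq> {}" using S_sub by auto
    define M where "M = Max Q"
    have M1: "M \<ge> 1" using Max_in[OF Q_fin QnE] Q_pos unfolding M_def by force
    have finU: "finite U" using US finS finite_subset by blast
    have "\<Prod>U \<le> (\<Prod>q\<in>U. M)"
      by (rule prod_mono) (use US S_sub Q_fin in \<open>auto simp: M_def\<close>)
    also have "\<dots> = M ^ card U" by simp
    also have "\<dots> \<le> M ^ card S" using M1 card_mono[OF finS US] by (intro power_increasing) auto
    finally have "real (\<Prod>U) \<le> real M ^ card S" by (metis of_nat_le_iff of_nat_power)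
    thus ?thesis using S_size unfolding M_def by linarith
  qed
  have mX: "real m \<le> X powr (1/4)" unfolding m_def by (rule prodU) auto
  have mn: "m \<le> n" using mX X1434 P_len cardP by linarith
  have prodQ': "real (\<Prod>Q') \<ge> X"
  proof -
    have "\<Prod>Q = \<Prod>(Q - S) * \<Prod>S" using prod.subset_diff[OF S_sub Q_fin, of id] by simp
    hence "real (\<Prod>Q) = real (\<Prod>Q') * real (\<Prod>S)" using Q'def by simp
    also have "\<dots> \<le> real (\<Prod>Q') * X powr (1/4)" by (rule mult_left_mono[OF prodU[of S]]) (auto simp del: of_nat_prod)
    finally have "X powr (5/4) \<le> real (\<Prod>Q') * X powr (1/4)" using Q_prod by linarith
    moreover have "X powr (5/4) = X * X powr (1/4)"
      using X powr_add[of X 1 "1/4"] by simp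
    ultimately have "X * X powr (1/4) \<le> real (\<Prod>Q') * X powr (1/4)" by simp
    thus ?thesis using X14 mult_right_le_imp_le[of X "X powr (1/4)" "real (\<Prod>Q')"] by linarith
  qed
  have P'P: "P' \<subseteq> P" using P'def by auto
  have injQ': "inj_on (proj Q') P'"
    using inj_proj[OF finQ' posQ' copQ' _ prodQ'] P'P P_sub by blast
  have prodQ: "real (\<Prod>Q) \<ge> X"
  proof -
    have "X powr 1 \<le> X powr (5/4)" using X by (intro powr_mono) auto
    thus ?thesis using X Q_prod by simp
  qed
  have injQ: "inj_on (proj Q) P" by (rule inj_proj[OF Q_fin Q_pos Q_cop P_sub prodQ])
  obtain c :: nat where c: "\<forall>q\<in>S-T. [c = a q] (mod q)"
    using chinese_remainder_nat[OF finST, of "\<lambda>q. q" a] copST by auto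
  have aST: "\<forall>q\<in>S. a q < q" using a_in unfolding Grp_def by (auto simp: PiE_iff)
  have cq: "int c mod int q = int (a q)" if "q \<in> S - T" for q
  proof -
    have "c mod q = a q mod q" using c that unfolding cong_def by auto
    also have "\<dots> = a q" using aST that by auto
    finally show ?thesis by (metis of_nat_mod)
  qed
  have restrGrp: "restrict a (S - T) \<in> Grp (S - T)"
    using aST unfolding Grp_def by auto
  have condiff: "proj (S - T) x = restrict a (S - T) \<longleftrightarrow> int m dvd x - int c" for x :: int
  proof -
    have "proj (S - T) x = restrict a (S - T) \<longleftrightarrow> (\<forall>q\<in>S-T. nat (x mod int q) = a q)"
      using proj_eq_Grp[OF restrGrp] by simp
    also have "\<dots> \<longleftrightarrow> (\<forall>q\<in>S-T. x mod int q = int c mod int q)"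
      using cq posST by (auto simp: nat_eq_iff)
    also have "\<dots> \<longleftrightarrow> (\<forall>q\<in>S-T. int q dvd x - int c)"
      by (simp add: mod_eq_dvd_iff)
    also have "\<dots> \<longleftrightarrow> int m dvd x - int c"
    proof
      assume "\<forall>q\<in>S-T. int q dvd x - int c"
      thus "int m dvd x - int c" unfolding m_def by (rule dvd_prod_int[OF finST copST])
    next
      assume h: "int m dvd x - int c"
      show "\<forall>q\<in>S-T. int q dvd x - int c"
      proof
        fix q assume "q \<in> S - T"
        hence "q dvd m" unfolding m_def using finST by (intro dvd_prodI) auto
        hence "int q dvd int m" by simp
        thus "int q dvd x - int c" using h by (rule dvd_trans)
      qed
    qed
    finally show ?thesis .
  qed
  have copdm: "coprime d (int m)"
  proof -
    have "coprime d (\<Prod>q\<in>S-T. int q)" using d_cop S_sub by (intro prod_coprime_right) auto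
    thus ?thesis unfolding m_def by simp
  qed
  obtain e where e: "[d * e = 1] (mod int m)" using cong_solve_coprime_int[OF copdm] by auto
  have mde: "int m dvd d * e - 1" using e by (simp add: cong_iff_dvd_diff)
  define k0 where "k0 = nat (((int c - b) * e) mod int m)"
  have k0int: "int k0 = ((int c - b) * e) mod int m" unfolding k0_def using m0 by simp
  have k0m: "k0 < m" using k0int m0 by (metis of_nat_less_iff pos_mod_bound of_nat_0_less_iff)
  have kcond: "int m dvd (b + d * int k) - int c \<longleftrightarrow> k mod m = k0" for k :: nat
  proof -
    have "k mod m = k0 \<longleftrightarrow> int k mod int m = ((int c - b) * e) mod int m"
      using k0int by (metis of_nat_eq_iff of_nat_mod)
    also have "\<dots> \<longleftrightarrow> int m dvd int k - (int c - b) * e" by (simp add: mod_eq_dvd_iff)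
    also have "\<dots> \<longleftrightarrow> int m dvd (b + d * int k) - int c"
    proof
      assume "int m dvd int k - (int c - b) * e"
      hence "int m dvd d * (int k - (int c - b) * e) + (d * e - 1) * (int c - b)"
        using mde by (intro dvd_add dvd_mult dvd_mult2) auto
      moreover have "d * (int k - (int c - b) * e) + (d * e - 1) * (int c - b) = (b + d * int k) - int c"
        by (simp add: algebra_simps)
      ultimately show "int m dvd (b + d * int k) - int c" by simp
    next
      assume h: "int m dvd (b + d * int k) - int c"
      have "int m dvd e * ((b + d * int k) - int c) - (d * e - 1) * int k"
        by (rule dvd_diff[OF dvd_mult[OF h] dvd_mult2[OF mde]])
      moreover have "e * ((b + d * int k) - int c) - (d * e - 1) * int k = int k - (int c - b) * e"
        by (simp add: algebra_simps)
      ultimately show "int m dvd int k - (int c - b) * e" by simp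
    qed
    finally show ?thesis by simp
  qed
  define n' where "n' = (n - k0 - 1) div m + 1"
  have kiff: "(k < n \<and> k mod m = k0) \<longleftrightarrow> (\<exists>j. j < n' \<and> k = k0 + m * j)" for k
  proof
    assume h: "k < n \<and> k mod m = k0"
    have "k = k0 + m * (k div m)" using h by (metis add.commute div_mult_mod_eq mult.commute)
    moreover have "k div m < n'"
    proof -
      have "k div m * m \<le> n - k0 - 1" using h \<open>k = k0 + m * (k div m)\<close> by (metis add_diff_cancel_left' diff_le_mono less_iff_succ_less_eq mult.commute diff_diff_left add.commute Suc_eq_plus1 add_le_imp_le_diff)
      hence "k div m \<le> (n - k0 - 1) div m" using m0 by (simp add: less_eq_div_iff_mult_less_eq)
      thus ?thesis unfolding n'_def by simp
    qed
    ultimately show "\<exists>j. j < n' \<and> k = k0 + m * j" by blast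
  next
    assume "\<exists>j. j < n' \<and> k = k0 + m * j"
    then obtain j where j: "j < n'" "k = k0 + m * j" by blast
    have "j \<le> (n - k0 - 1) div m" using j unfolding n'_def by simp
    hence "j * m \<le> n - k0 - 1" using m0 by (simp add: less_eq_div_iff_mult_less_eq)
    hence "k < n" using j k0m mn by (simp add: mult.commute)
    moreover have "k mod m = k0" using j k0m by simp
    ultimately show "k < n \<and> k mod m = k0" by simp
  qed
  have P'eq: "P' = {(b + d * int k0) + (d * int m) * int j | j. j < n'}"
  proof -
    have "P' = {b + d * int k | k. k < n \<and> k mod m = k0}"
      unfolding P'def Pdef condiff kcond[symmetric] by auto
    also have "\<dots> = {b + d * int k | k. \<exists>j. j < n' \<and> k = k0 + m * j}"
      using kiff by blast
    also have "\<dots> = (\<lambda>j. b + d * int (k0 + m * j)) ` {..<n'}" by blast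
    also have "\<dots> = (\<lambda>j. (b + d * int k0) + (d * int m) * int j) ` {..<n'}"
      by (rule image_cong) (simp_all add: algebra_simps)
    also have "\<dots> = {(b + d * int k0) + (d * int m) * int j | j. j < n'}" by auto
    finally show ?thesis .
  qed
  have cardP': "card P' = n'"
  proof -
    have "P' = (\<lambda>j. (b + d * int k0) + (d * int m) * int j) ` {..<n'}" unfolding P'eq by auto
    moreover have "inj_on (\<lambda>j. (b + d * int k0) + (d * int m) * int j) {..<n'}"
      using d0 m0 by (auto intro: inj_onI)
    ultimately show ?thesis by (simp add: card_image)
  qed
  have n0: "n > 0" using n1 by simp
  have bnd: "\<bar>real m * real n' - real n\<bar> < real m"
  proof -
    define N where "N = n - k0 - 1"
    have "m * (N div m) + N mod m = N" by simp
    moreover have "N mod m < m" using m0 by simp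
    moreover have "N + k0 + 1 = n" unfolding N_def using k0m mn by simp
    moreover have "m * n' = m * (N div m) + m" unfolding n'_def N_def by simp
    ultimately have e1: "m * n' + N mod m + k0 + 1 = m + n" and e2: "N mod m < m" by linarith+
    have "real (m * n' + N mod m + k0 + 1) = real (m + n)" using e1 by (simp only:)
    hence "real m * real n' + real (N mod m) + real k0 + 1 = real m + real n" by simp
    moreover have "real (N mod m) + 1 \<le> real m" "real k0 + 1 \<le> real m"
      using e2 k0m by (metis Suc_leI of_nat_Suc of_nat_le_iff add.commute)+
    moreover have "0 \<le> real (N mod m)" "0 \<le> real k0" by simp_all
    ultimately show ?thesis unfolding abs_less_iff by linarith
  qed
  define \<eta> where "\<eta> = real m * real n' / real n - 1"
  have eta_bnd: "\<bar>\<eta>\<bar> \<le> X powr (-1/2)"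
  proof -
    have "\<eta> = (real m * real n' - real n) / real n" unfolding \<eta>_def using n0 by (simp add: field_simps)
    hence "\<bar>\<eta>\<bar> = \<bar>real m * real n' - real n\<bar> / real n" by simp
    also have "\<dots> \<le> real m / real n" using bnd n0 by (intro divide_right_mono) auto
    also have "\<dots> \<le> X powr (1/4) / X powr (3/4)"
      using mX P_len cardP X by (intro frac_le) auto
    also have "\<dots> = X powr (1/4 - 3/4)" by (rule powr_diff[symmetric])
    also have "1/4 - 3/4 = (-1/2::real)" by simp
    finally show ?thesis .
  qed
  have ex': "\<exists>b' n''. n'' \<ge> 1 \<and> P' = {b' + (d * int m) * int k | k. k < n''}"
    using P'eq by (intro exI[of _ "b + d * int k0"] exI[of _ n']) (simp add: n'_def)
  have ap': "arith_prog P' (d * int m)"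
    unfolding arith_prog_def using d0 m0 ex' by simp
  have cop': "\<forall>q\<in>Q'. coprime (d * int m) (int q)"
  proof
    fix q assume qQ': "q \<in> Q'"
    have "coprime m q" unfolding m_def using Q_cop S_sub qQ' Q'def by (intro prod_coprime_left) auto
    thus "coprime (d * int m) (int q)" using d_cop qQ' Q'def by simp
  qed
  have TQ: "T \<subseteq> Q" using T_sub S_sub by blast
  have prodsplit: "\<Prod>Q = \<Prod>T * (m * \<Prod>Q')"
  proof -
    have "\<Prod>Q = \<Prod>(Q - T) * \<Prod>T" using prod.subset_diff[OF TQ Q_fin, of id] by simp
    moreover have "Q - T = (S - T) \<union> Q'" using Q'def S_sub T_sub by blast
    moreover have "\<Prod>((S - T) \<union> Q') = m * \<Prod>Q'"
      unfolding m_def using finST finQ' Q'def by (intro prod.union_disjoint) auto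
    ultimately show ?thesis by simp
  qed
  have prodT0: "\<Prod>T > 0" using finT posS T_sub by (intro prod_pos) auto
  have prodQ'0: "\<Prod>Q' > 0" using finQ' posQ' by (intro prod_pos) auto
  have n'0: "n' > 0" unfolding n'_def by simp
  have main: "specialise S a (avgE Q T (lift P Q f)) y = (1 + of_real \<eta>) * lift P' Q' f y"
    if y: "y \<in> Grp Q'" for f y
  proof -
    define w where "w = (\<lambda>q. if q \<in> S then a q else y q)"
    have yl: "\<forall>q\<in>Q'. y q < q" "\<forall>q. q \<notin> Q' \<longrightarrow> y q = undefined"
      using y unfolding Grp_def by (auto simp: PiE_iff extensional_def)
    have wG: "w \<in> Grp Q"
      using yl aST S_sub Q'def unfolding Grp_def w_def by (auto simp: PiE_iff extensional_def)
    define A where "A = {z\<in>Grp Q. \<forall>q\<in>Q-T. z q = w q}"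
    have finA: "finite A" unfolding A_def using finite_Grp[OF Q_fin] by simp
    have "specialise S a (avgE Q T (lift P Q f)) y = avgE Q T (lift P Q f) w"
      unfolding specialise_def w_def ..
    also have "\<dots> = (\<Sum>z\<in>A. lift P Q f z) / of_nat (\<Prod>T)"
      unfolding A_def by (rule avgE_eq[OF Q_fin Q_pos TQ wG])
    finally have L: "specialise S a (avgE Q T (lift P Q f)) y = (\<Sum>z\<in>A. lift P Q f z) / of_nat (\<Prod>T)" .
    have projA: "proj Q x \<in> A \<longleftrightarrow> x \<in> P' \<and> proj Q' x = y" if xP: "x \<in> P" for x
    proof -
      have "proj Q x \<in> A \<longleftrightarrow> (\<forall>q\<in>Q-T. nat (x mod int q) = w q)"
        unfolding A_def using proj_Grp[OF Q_pos, of x] by (auto simp: proj_def)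
      also have "\<dots> \<longleftrightarrow> (\<forall>q\<in>S-T. nat (x mod int q) = a q) \<and> (\<forall>q\<in>Q'. nat (x mod int q) = y q)"
        using Q'def S_sub T_sub unfolding w_def by auto
      also have "\<dots> \<longleftrightarrow> proj (S - T) x = restrict a (S - T) \<and> proj Q' x = y"
        using proj_eq_Grp[OF restrGrp, of x] proj_eq_Grp[OF y, of x] by simp
      finally show ?thesis using xP P'def by auto
    qed
    have sumA: "(\<Sum>z\<in>A. lift P Q f z) = (\<Sum>x\<in>{x\<in>P. proj Q x \<in> A}. of_real (real (\<Prod>Q) / real n) * f x)"
    proof -
      have "(\<Sum>z\<in>A. lift P Q f z) = (\<Sum>z\<in>proj Q ` {x\<in>P. proj Q x \<in> A}. lift P Q f z)"
        by (rule sum.mono_neutral_right[OF finA]) (auto intro!: lift_zero)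
      also have "\<dots> = (\<Sum>x\<in>{x\<in>P. proj Q x \<in> A}. lift P Q f (proj Q x))"
        using inj_on_subset[OF injQ, of "{x\<in>P. proj Q x \<in> A}"] by (simp add: sum.reindex o_def)
      also have "\<dots> = (\<Sum>x\<in>{x\<in>P. proj Q x \<in> A}. of_real (real (\<Prod>Q) / real n) * f x)"
        by (rule sum.cong[OF refl]) (simp add: lift_at[OF injQ] card_Grp[OF Q_fin] cardP)
      finally show ?thesis .
    qed
    show ?thesis
    proof (cases "\<exists>x0\<in>P'. proj Q' x0 = y")
      case True
      then obtain x0 where x0: "x0 \<in> P'" "proj Q' x0 = y" by blast
      have single: "{x\<in>P. proj Q x \<in> A} = {x0}"
      proof -
        have "x = x0" if "x \<in> P'" "proj Q' x = y" for x
          using injQ' that x0 by (auto dest: inj_onD)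
        thus ?thesis using projA x0 P'P by blast
      qed
      have R: "lift P' Q' f y = of_real (real (\<Prod>Q') / real n') * f x0"
        using lift_at[OF injQ' x0(1), of f] x0(2) card_Grp[OF finQ'] cardP' by simp
      have "of_real (real (\<Prod>Q) / real n) / of_nat (\<Prod>T) =
            (1 + of_real \<eta>) * (of_real (real (\<Prod>Q') / real n') :: complex)"
      proof -
        have "real (\<Prod>Q) / real n / real (\<Prod>T) = (1 + \<eta>) * (real (\<Prod>Q') / real n')"
          unfolding \<eta>_def prodsplit using n0 n'0 prodT0 by (simp add: field_simps del: of_nat_prod)
        hence "of_real (real (\<Prod>Q) / real n / real (\<Prod>T)) = (of_real ((1 + \<eta>) * (real (\<Prod>Q') / real n')) :: complex)"
          by (simp only:)
        thus ?thesis by (simp del: of_nat_prod)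
      qed
      note K = this
      have "(\<Sum>x\<in>{x0}. of_real (real (\<Prod>Q) / real n) * f x) / of_nat (\<Prod>T)
          = (of_real (real (\<Prod>Q) / real n) / of_nat (\<Prod>T)) * f x0" by simp
      also have "\<dots> = ((1 + of_real \<eta>) * (of_real (real (\<Prod>Q') / real n') :: complex)) * f x0"
        by (simp only: K)
      also have "\<dots> = (1 + of_real \<eta>) * (of_real (real (\<Prod>Q') / real n') * f x0)"
        by (simp only: mult.assoc)
      finally show ?thesis unfolding L sumA single R .
    next
      case False
      have "{x\<in>P. proj Q x \<in> A} = {}" using projA False by blast
      moreover have "lift P' Q' f y = 0" using False by (intro lift_zero) auto
      ultimately show ?thesis unfolding L sumA by (simp only: sum.empty) simp
    qed
  qed
  show "(P' \<subseteq> {x. 1 \<le> x \<and> real_of_int x \<le> X}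
       \<and> (\<exists>d'. arith_prog P' d' \<and> (\<forall>q\<in>Q'. coprime d' (int q)))
       \<and> real (\<Prod>Q') \<ge> X
       \<and> inj_on (proj Q') P')
    \<and> (\<exists>\<eta>::real. \<bar>\<eta>\<bar> \<le> X powr (-1/2) \<and>
         (\<forall>f::int \<Rightarrow> complex. \<forall>y\<in>Grp Q'.
            specialise S a (avgE Q T (lift P Q f)) y = (1 + of_real \<eta>) * lift P' Q' f y))"
    using P'P P_sub ap' cop' prodQ' injQ' eta_bnd main by blast
qed

end
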